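(* Let $d_A,d_B\ge 2$ and let $\rho_{AB}$ be a separable density operator on $\mathbb{C}^{d_A}\otimes\mathbb{C}^{d_B}$, i.e. $\rho_{AB}=\sum_j q_j\,\rho^A_j\otimes\rho^B_j$ with $q_j\ge0$, $\sum_j q_j=1$ and $\rho^A_j,\rho^B_j$ density operators. Let $\{|i_{mA}\rangle\}_{i=1}^{d_A}$, $m=1,\dots,M$, be $M$ mutually unbiased bases of $\mathbb{C}^{d_A}$ and $\{|s_{mB}\rangle\}_{s=1}^{d_B}$, $m=1,\dots,M$, be $M$ mutually unbiased bases of $\mathbb{C}^{d_B}$, and let $p^{(m,m)}_{is}=\langle i_{mA}|\langle s_{mB}|\rho_{AB}|i_{mA}\rangle|s_{mB}\rangle$. With $K_X=\left\lfloor\frac{Md_X}{d_X+M-1}\right\rfloor$ for $X\in\{A,B\}$, $$\sum_{m=1}^M H\{p^{(m,m)}_{is};is\}\ge \sum_{X\in\{A,B\}}\Big[M\log_2K_X+(K_X+1)\Big(M-K_X\frac{d_X+M-1}{d_X}\Big)\log_2\Big(1+\frac1{K_X}\Big)\Big].$$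
   Context: Orthonormal bases $\{|i_m\rangle\}_{i=1}^d$, $m=1,\dots,M$, of $\mathbb{C}^d$ are mutually unbiased if $|\langle i_m|j_n\rangle|^2=1/d$ for all $i,j$ and all $m\ne n$. $H\{p^{(m,m)}_{is};is\}=-\sum_{i,s}p^{(m,m)}_{is}\log_2 p^{(m,m)}_{is}$ (with $0\log_2 0=0$) is the Shannon entropy of the joint outcome distribution when $A$ and $B$ are both measured in their $m$th bases. *)

theory Defs
  imports Complex_Main
begin

text \<open>Vectors of C^d are functions nat => complex, only indices < d matter.
  Operators on C^d are functions nat => nat => complex (matrix entries, indices < d).
  Operators on C^dA (x) C^dB are indexed by pairs (a,b) with a < dA, b < dB.\<close>

definition cinner :: "nat \<Rightarrow> (nat \<Rightarrow> complex) \<Rightarrow> (nat \<Rightarrow> complex) \<Rightarrow> complex" where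
  "cinner d u v = (\<Sum>k<d. cnj (u k) * v k)"

definition orthonormal_basis :: "nat \<Rightarrow> (nat \<Rightarrow> nat \<Rightarrow> complex) \<Rightarrow> bool" where
  "orthonormal_basis d e \<longleftrightarrow>
     (\<forall>i<d. \<forall>j<d. cinner d (e i) (e j) = (if i = j then 1 else 0))"

text \<open>e m is the m-th basis (m < M), e m i its i-th vector.\<close>
definition mutually_unbiased :: "nat \<Rightarrow> nat \<Rightarrow> (nat \<Rightarrow> nat \<Rightarrow> nat \<Rightarrow> complex) \<Rightarrow> bool" where
  "mutually_unbiased d M e \<longleftrightarrow>
     (\<forall>m<M. orthonormal_basis d (e m)) \<and>
     (\<forall>m<M. \<forall>n<M. m \<noteq> n \<longrightarrow>
        (\<forall>i<d. \<forall>j<d. (cmod (cinner d (e m i) (e n j)))\<^sup>2 = 1 / real d))"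

definition density_op :: "nat \<Rightarrow> (nat \<Rightarrow> nat \<Rightarrow> complex) \<Rightarrow> bool" where
  "density_op d \<rho> \<longleftrightarrow>
     (\<forall>i<d. \<forall>j<d. \<rho> i j = cnj (\<rho> j i)) \<and>
     (\<forall>v. 0 \<le> Re (\<Sum>i<d. \<Sum>j<d. cnj (v i) * \<rho> i j * v j)) \<and>
     (\<Sum>i<d. \<rho> i i) = 1"

definition separable ::
  "nat \<Rightarrow> nat \<Rightarrow> (nat \<times> nat \<Rightarrow> nat \<times> nat \<Rightarrow> complex) \<Rightarrow> bool" where
  "separable dA dB \<rho> \<longleftrightarrow>
     (\<exists>(J::nat) (q::nat \<Rightarrow> real) \<rho>A \<rho>B.
        (\<forall>j<J. 0 \<le> q j) \<and> (\<Sum>j<J. q j) = 1 \<and>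
        (\<forall>j<J. density_op dA (\<rho>A j) \<and> density_op dB (\<rho>B j)) \<and>
        (\<forall>a<dA. \<forall>b<dB. \<forall>a'<dA. \<forall>b'<dB.
           \<rho> (a, b) (a', b') = (\<Sum>j<J. complex_of_real (q j) * \<rho>A j a a' * \<rho>B j b b')))"

text \<open>p i s = <i|<s| rho |i>|s> for product vector |i>|s>.\<close>
definition joint_prob ::
  "nat \<Rightarrow> nat \<Rightarrow> (nat \<times> nat \<Rightarrow> nat \<times> nat \<Rightarrow> complex) \<Rightarrow>
   (nat \<Rightarrow> complex) \<Rightarrow> (nat \<Rightarrow> complex) \<Rightarrow> real" where
  "joint_prob dA dB \<rho> u v =
     Re (\<Sum>a<dA. \<Sum>b<dB. \<Sum>a'<dA. \<Sum>b'<dB.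
           cnj (u a) * cnj (v b) * \<rho> (a, b) (a', b') * u a' * v b')"

definition shannon2 :: "nat \<Rightarrow> nat \<Rightarrow> (nat \<Rightarrow> nat \<Rightarrow> real) \<Rightarrow> real" where
  "shannon2 dA dB p = - (\<Sum>i<dA. \<Sum>s<dB. (if p i s = 0 then 0 else p i s * log 2 (p i s)))"

definition Kval :: "nat \<Rightarrow> nat \<Rightarrow> real" where
  "Kval M d = real_of_int \<lfloor>real M * real d / (real d + real M - 1)\<rfloor>"

definition bound_term :: "nat \<Rightarrow> nat \<Rightarrow> real" where
  "bound_term M d = (let K = Kval M d in
     real M * log 2 K + (K + 1) * (real M - K * (real d + real M - 1) / real d) * log 2 (1 + 1 / K))"

end

theory Submission
  imports Defs "Jordan_Normal_Form.Determinant" "HOL-Analysis.Convex"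
begin


definition "htL (K::real) = ln (1 + 1/K)"
definition "htc K = K * (K+1) * htL K"
definition "htA K = ln K + (K+1) * htL K"
definition "hh K x = - ln x + htc K * x"
definition "phi K x = x * (hh K x - htA K)"

lemma ln_ge_one_minus_inv: "0 < y \<Longrightarrow> 1 - 1/y \<le> ln (y::real)"
  using ln_le_minus_one[of "1/y"] by (simp add: ln_div)

context fixes K :: real assumes K1: "K \<ge> 1" begin

lemma L_bounds: "1/(K+1) \<le> htL K" "htL K \<le> 1/K"
proof -
  have p: "0 < 1 + 1/K" using K1 by (simp add: add_pos_pos)
  show "htL K \<le> 1/K" unfolding htL_def using ln_le_minus_one[OF p] by simp
  have "1 - 1/(1+1/K) \<le> htL K" unfolding htL_def using ln_ge_one_minus_inv[OF p] .
  moreover have "1 - 1/(1+1/K) = 1/(K+1)" using K1 by (simp add: field_simps)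
  ultimately show "1/(K+1) \<le> htL K" by simp
qed

lemma c_bounds: "K \<le> htc K" "htc K \<le> K + 1"
proof -
  have "K * (K+1) * (1/(K+1)) \<le> K * (K+1) * htL K"
    using L_bounds(1) K1 by (intro mult_left_mono) auto
  then show "K \<le> htc K" unfolding htc_def using K1 by simp
  have "K * (K+1) * htL K \<le> K * (K+1) * (1/K)"
    using L_bounds(2) K1 by (intro mult_left_mono) auto
  then show "htc K \<le> K + 1" unfolding htc_def using K1 by simp
qed

lemma L_eq: "htL K = ln (K+1) - ln K"
proof -
  have "1 + 1/K = (K+1)/K" using K1 by (simp add: field_simps)
  then show ?thesis unfolding htL_def using K1 by (simp add: ln_div)
qed

lemma A_R: "htA K = ln K + htc K / K"
  unfolding htA_def htc_def using K1 by simp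

lemma A_r: "htA K = ln (K+1) + htc K / (K+1)"
proof -
  have 1: "htc K / (K+1) = K * htL K" unfolding htc_def using K1 by simp
  have "htA K = (htL K + ln K) + K * htL K" unfolding htA_def by (simp add: algebra_simps)
  also have "htL K + ln K = ln (K+1)" using L_eq by simp
  finally show ?thesis using 1 by simp
qed

lemma hh_high: "0 < x \<Longrightarrow> hh K x - htA K \<ge> (K*x - 1) * (htc K / K - 1)"
proof -
  assume x: "0 < x"
  have "1 - 1/(K*x) \<le> ln (K*x)" using x K1 by (intro ln_ge_one_minus_inv) simp
  hence "- ln x - ln K \<ge> 1 - K*x"
    using ln_le_minus_one[of "K*x"] x K1 by (simp add: ln_mult)
  hence "hh K x - htA K \<ge> 1 - K*x + htc K * x - htc K / K"
    unfolding hh_def A_R by simp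
  moreover have "1 - K*x + htc K * x - htc K / K = (K*x - 1) * (htc K / K - 1)"
    using K1 by (simp add: field_simps)
  ultimately show ?thesis by simp
qed

lemma hh_low: "0 < x \<Longrightarrow> hh K x - htA K \<ge> (1 - (K+1)*x) * (1 - htc K / (K+1))"
proof -
  assume x: "0 < x"
  have "1 - 1/(1/((K+1)*x)) \<le> ln (1/((K+1)*x))" using x K1 by (intro ln_ge_one_minus_inv) simp
  hence "- ln x - ln (K+1) \<ge> 1 - (K+1)*x"
    using x K1 by (simp add: ln_div ln_mult)
  hence "hh K x - htA K \<ge> 1 - (K+1)*x + htc K * x - htc K / (K+1)"
    unfolding hh_def A_r by simp
  moreover have "1 - (K+1)*x + htc K * x - htc K / (K+1) = (1 - (K+1)*x) * (1 - htc K / (K+1))"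
    using K1 by (simp add: field_simps)
  ultimately show ?thesis by simp
qed

lemma phi_nonneg_low: "0 \<le> x \<Longrightarrow> x \<le> 1/(K+1) \<Longrightarrow> 0 \<le> phi K x"
proof -
  assume x: "0 \<le> x" "x \<le> 1/(K+1)"
  show ?thesis
  proof (cases "x = 0")
    case True then show ?thesis by (simp add: phi_def)
  next
    case False
    have a: "0 \<le> 1 - (K+1)*x" using x K1 by (simp add: field_simps)
    have b: "0 \<le> 1 - htc K / (K+1)" using c_bounds K1 by (simp add: field_simps)
    have "0 \<le> hh K x - htA K" using hh_low[of x] x False mult_nonneg_nonneg[OF a b] by linarith
    then show ?thesis unfolding phi_def using x by simp
  qed
qed

lemma phi_nonneg_high: "1/K \<le> x \<Longrightarrow> 0 \<le> phi K x"
proof -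
  assume x: "1/K \<le> x"
  have xp: "0 < x" using x K1 by (smt (verit) divide_pos_pos)
  have a: "0 \<le> K*x - 1" using x K1 by (simp add: field_simps)
  have b: "0 \<le> htc K / K - 1" using c_bounds K1 by (simp add: field_simps)
  have "0 \<le> hh K x - htA K" using hh_high[OF xp] mult_nonneg_nonneg[OF a b] by linarith
  then show ?thesis unfolding phi_def using xp by simp
qed

lemma phi_r: "phi K (1/(K+1)) = 0"
  unfolding phi_def hh_def A_r using K1 by (simp add: ln_div)

lemma phi_R: "phi K (1/K) = 0"
  unfolding phi_def hh_def A_R using K1 by (simp add: ln_div)

lemma hh_mono: "0 < x \<Longrightarrow> x \<le> z \<Longrightarrow> z \<le> 1 / htc K \<Longrightarrow> hh K z \<le> hh K x"
proof -
  assume a: "0 < x" "x \<le> z" "z \<le> 1 / htc K"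
  have cpos: "0 < htc K" using c_bounds K1 by linarith
  have z: "0 < z" using a by linarith
  have "1 - 1/(z/x) \<le> ln (z/x)" using a z by (intro ln_ge_one_minus_inv) simp
  hence l: "1 - x/z \<le> ln z - ln x" using a z by (simp add: ln_div)
  have "htc K * z \<le> 1" using a cpos by (simp add: field_simps)
  hence "(z - x) * htc K \<le> (z - x) * (1/z)" using a z 
    by (intro mult_left_mono) (simp_all add: field_simps)
  moreover have "(z-x) * (1/z) = 1 - x/z" using z by (simp add: field_simps)
  ultimately show ?thesis unfolding hh_def using l by (simp add: algebra_simps)
qed

lemma phi_merge: "0 \<le> x \<Longrightarrow> 0 \<le> y \<Longrightarrow> x + y \<le> 1 / htc K \<Longrightarrow> phi K (x+y) \<le> phi K x + phi K y"
proof -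
  assume a: "0 \<le> x" "0 \<le> y" "x + y \<le> 1 / htc K"
  have 1: "x * (hh K (x+y) - htA K) \<le> x * (hh K x - htA K)"
  proof (cases "x = 0")
    case False then show ?thesis using a hh_mono[of x "x+y"] by (intro mult_left_mono) auto
  qed simp
  have 2: "y * (hh K (x+y) - htA K) \<le> y * (hh K y - htA K)"
  proof (cases "y = 0")
    case False then show ?thesis using a hh_mono[of y "x+y"] by (intro mult_left_mono) auto
  qed simp
  show ?thesis using 1 2 unfolding phi_def by (simp add: algebra_simps)
qed

definition "phid x = - ln x + 2 * htc K * x - htA K - 1"

lemma phi_deriv: "0 < x \<Longrightarrow> (phi K has_real_derivative phid x) (at x)"
proof -
  assume x: "0 < x"
  have "((\<lambda>x. x * (- ln x + htc K * x - htA K)) has_real_derivative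
      (1 * (- ln x + htc K * x - htA K) + x * (- (1/x) + htc K))) (at x)"
    using x by (intro derivative_eq_intros) auto
  moreover have "1 * (- ln x + htc K * x - htA K) + x * (- (1/x) + htc K) = phid x"
    unfolding phid_def using x by (simp add: field_simps)
  ultimately show ?thesis unfolding phi_def hh_def by simp
qed

lemma phi_convex: "convex_on {1/(2*htc K)..} (phi K)"
proof (rule convex_on_realI[where f'=phid])
  have cpos: "0 < htc K" using c_bounds K1 by linarith
  show "connected {1/(2*htc K)..}" by simp
  fix x assume "x \<in> {1/(2*htc K)..}"
  then have "0 < x" using cpos by (smt (verit) atLeast_iff divide_pos_pos)
  then show "(phi K has_real_derivative phid x) (at x)" by (rule phi_deriv)
next
  have cpos: "0 < htc K" using c_bounds K1 by linarith
  fix x y assume a: "x \<in> {1/(2*htc K)..}" "y \<in> {1/(2*htc K)..}" "x \<le> y"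
  have x: "0 < x" using a cpos by (smt (verit) atLeast_iff divide_pos_pos)
  have y: "0 < y" using a x by linarith
  have "ln (y/x) \<le> y/x - 1" using x y by (intro ln_le_minus_one) simp
  hence l: "ln y - ln x \<le> (y - x) / x" using x y by (simp add: ln_div field_simps)
  have "1/x \<le> 2 * htc K" using a x cpos by (simp add: field_simps)
  hence "(y - x) * (1/x) \<le> (y - x) * (2 * htc K)" using a by (intro mult_left_mono) auto
  then show "phid x \<le> phid y" unfolding phid_def using l by (simp add: algebra_simps)
qed

definition "GG b = K * phi K ((1-b)/K) + phi K b"
definition "Gp b = phid b - phid ((1-b)/K)"
definition "Gpp b = - 1/b + 2 * htc K - 1/(1-b) + 2 * htc K / K"

lemma GG_deriv: "0 < b \<Longrightarrow> b < 1 \<Longrightarrow> (GG has_real_derivative Gp b) (at b)"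
proof -
  assume b: "0 < b" "b < 1"
  have p: "0 < (1-b)/K" using b K1 by simp
  have d1: "((\<lambda>b. (1-b)/K) has_real_derivative (-1/K)) (at b)" using K1 by (auto intro!: derivative_eq_intros)
  have "((\<lambda>b. phi K ((1-b)/K)) has_real_derivative phid ((1-b)/K) * (-1/K)) (at b)"
    using DERIV_chain2[where f="phi K" and g="\<lambda>b. (1-b)/K" and x=b, OF phi_deriv[OF p] d1] by simp
  then have "((\<lambda>b. K * phi K ((1-b)/K) + phi K b) has_real_derivative K * (phid ((1-b)/K) * (-1/K)) + phid b) (at b)"
    using phi_deriv[of b] b by (intro derivative_eq_intros) auto
  moreover have "K * (phid ((1-b)/K) * (-1/K)) + phid b = Gp b" unfolding Gp_def using K1 by (simp add: field_simps)
  ultimately show ?thesis unfolding GG_def[abs_def] by simp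
qed

lemma phid_deriv: "0 < x \<Longrightarrow> (phid has_real_derivative (- 1/x + 2 * htc K)) (at x)"
  unfolding phid_def[abs_def] by (auto intro!: derivative_eq_intros)

lemma Gp_deriv: "0 < b \<Longrightarrow> b < 1 \<Longrightarrow> (Gp has_real_derivative Gpp b) (at b)"
proof -
  assume b: "0 < b" "b < 1"
  have p: "0 < (1-b)/K" using b K1 by simp
  have d1: "((\<lambda>b. (1-b)/K) has_real_derivative (-1/K)) (at b)" using K1 by (auto intro!: derivative_eq_intros)
  have "((\<lambda>b. phid ((1-b)/K)) has_real_derivative (- 1/((1-b)/K) + 2 * htc K) * (-1/K)) (at b)"
    using DERIV_chain2[where f="phid" and g="\<lambda>b. (1-b)/K" and x=b, OF phid_deriv[OF p] d1] by simp
  then have "((\<lambda>b. phid b - phid ((1-b)/K)) has_real_derivative (- 1/b + 2 * htc K) - (- 1/((1-b)/K) + 2 * htc K) * (-1/K)) (at b)"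
    using phid_deriv[of b] b by (intro derivative_eq_intros) auto
  moreover have "(- 1/b + 2 * htc K) - (- 1/((1-b)/K) + 2 * htc K) * (-1/K) = Gpp b"
  proof -
    have "K \<noteq> 0" "1 - b \<noteq> 0" "b \<noteq> 0" using K1 b by auto
    then show ?thesis unfolding Gpp_def by (simp add: field_simps)
  qed
  ultimately show ?thesis unfolding Gp_def[abs_def] by simp
qed

lemma Gp_convex: "convex_on {0<..1/(K+1)} Gp"
proof (rule convex_on_realI[where f'=Gpp])
  show "connected {0<..1/(K+1)}" by simp
  fix x assume "x \<in> {0<..1/(K+1)}"
  moreover have "1/(K+1) < 1" using K1 by (simp add: field_simps)
  ultimately show "(Gp has_real_derivative Gpp x) (at x)" by (intro Gp_deriv) auto
next
  fix x y assume a: "x \<in> {0<..1/(K+1)}" "y \<in> {0<..1/(K+1)}" "x \<le> y"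
  have h: "1/(K+1) \<le> 1/2" using K1 by (simp add: field_simps)
  have x: "0 < x" "x \<le> 1/2" and y: "0 < y" "y \<le> 1/2" using a h by auto
  have xy: "x * y \<le> (1-x)*(1-y)" using x y by (simp add: algebra_simps)
  have "(y - x) / ((1-x)*(1-y)) \<le> (y - x) / (x*y)"
    using a x y xy by (intro divide_left_mono) (auto intro: mult_pos_pos)
  moreover have "(y - x) / ((1-x)*(1-y)) = 1/(1-y) - 1/(1-x)" using x y by (simp add: field_simps)
  moreover have "(y - x) / (x*y) = 1/x - 1/y" using x y by (simp add: field_simps)
  ultimately show "Gpp x \<le> Gpp y" unfolding Gpp_def by simp
qed

lemma r_fix: "(1 - 1/(K+1))/K = 1/(K+1)"
proof -
  have "1 - 1/(K+1) = K/(K+1)" using K1 by (simp add: field_simps)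
  then show ?thesis using K1 by simp
qed

lemma Gp_r: "Gp (1/(K+1)) = 0"
  unfolding Gp_def r_fix by simp

lemma GG_r: "GG (1/(K+1)) = 0"
  unfolding GG_def r_fix phi_r by simp

lemma GG_0: "GG 0 = 0"
proof -
  have "phi K 0 = 0" by (simp add: phi_def)
  then show ?thesis unfolding GG_def using phi_R by simp
qed

lemma GG_eps: "0 < e \<Longrightarrow> e \<le> 1/(K+1) \<Longrightarrow> - e \<le> GG e"
proof -
  assume e: "0 < e" "e \<le> 1/(K+1)"
  have "1/(K+1) < 1" using K1 by (simp add: field_simps)
  then have e1: "e < 1" using e by linarith
  define x where "x = (1-e)/K"
  have x: "0 < x" unfolding x_def using e1 K1 by simp
  have Kx: "K * x - 1 = - e" unfolding x_def using K1 by simp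
  have cb: "0 \<le> htc K / K - 1" "htc K / K - 1 \<le> 1" using c_bounds K1 by (simp_all add: field_simps)
  have Kx1: "K * x \<le> 1" "0 \<le> K * x" using Kx e x K1 by auto
  have ee: "e * (htc K / K - 1) \<le> e" using e cb mult_left_mono[of "htc K / K - 1" 1 e] by simp
  have f1: "K * x * (e * (htc K / K - 1)) \<le> 1 * e"
    using Kx1 ee e cb by (intro mult_mono) auto
  have "x * ((K*x - 1) * (htc K / K - 1)) \<le> x * (hh K x - htA K)"
    using hh_high[OF x] x by (intro mult_left_mono) auto
  then have f2: "K * (x * ((K*x - 1) * (htc K / K - 1))) \<le> K * phi K x"
    using mult_left_mono[of _ _ K] K1 unfolding phi_def by simp
  have f3: "K * (x * ((K*x - 1) * (htc K / K - 1))) = - (K * x * (e * (htc K / K - 1)))"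
    unfolding Kx by (simp add: algebra_simps)
  from f1 f2 f3 have "- e \<le> K * phi K x" by linarith
  moreover have "0 \<le> phi K e" using e by (intro phi_nonneg_low) auto
  ultimately show ?thesis unfolding GG_def x_def by simp
qed

lemma GG_nonneg: "0 \<le> b \<Longrightarrow> b \<le> 1/(K+1) \<Longrightarrow> 0 \<le> GG b"
proof (rule ccontr)
  assume b: "0 \<le> b" "b \<le> 1/(K+1)" and neg: "\<not> 0 \<le> GG b"
  define r where "r = 1/(K+1)"
  have r1: "r < 1" "0 < r" unfolding r_def using K1 by (simp_all add: field_simps)
  have b0: "b \<noteq> 0" using neg GG_0 by auto
  have br: "b \<noteq> r" using neg GG_r r_def by auto
  have bpos: "0 < b" "b < r" using b b0 br r_def by auto
  have "\<exists>z. b < z \<and> z < r \<and> GG r - GG b = (r - b) * Gp z"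
  proof (rule MVT2)
    show "b < r" using bpos by simp
    fix x assume "b \<le> x" "x \<le> r"
    then show "(GG has_real_derivative Gp x) (at x)" using GG_deriv bpos r1 by auto
  qed
  then obtain eta where eta: "b < eta" "eta < r" "GG r - GG b = (r - b) * Gp eta" by blast
  have "0 < (r - b) * Gp eta" using eta(3) neg GG_r r_def by simp
  then have Geta: "0 < Gp eta" using bpos by (simp add: zero_less_mult_iff)
  have pos: "0 < Gp xi" if xi: "0 < xi" "xi \<le> eta" for xi
  proof (cases "xi = eta")
    case True then show ?thesis using Geta by simp
  next
    case False
    define t where "t = (eta - xi)/(r - xi)"
    have t: "0 \<le> t" "t \<le> 1" unfolding t_def using xi eta False by (auto simp: field_simps)
    have rx: "r - xi > 0" using xi eta by simp
    have "(1 - t) *\<^sub>R xi + t *\<^sub>R r = xi + t * (r - xi)" by (simp add: algebra_simps)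
    also have "t * (r - xi) = eta - xi" unfolding t_def using rx by simp
    finally have eq: "(1 - t) *\<^sub>R xi + t *\<^sub>R r = eta" by simp
    have m1: "xi \<in> {0<..1/(K+1)}" "r \<in> {0<..1/(K+1)}" using xi eta r1 unfolding r_def by auto
    have "Gp ((1 - t) *\<^sub>R xi + t *\<^sub>R r) \<le> (1 - t) * Gp xi + t * Gp r"
      by (rule convex_onD[OF Gp_convex t m1])
    then have "Gp eta \<le> (1 - t) * Gp xi" using eq Gp_r r_def by simp
    moreover have "1 - t > 0" unfolding t_def using xi eta False by (auto simp: field_simps)
    ultimately show ?thesis using Geta by (smt (verit) mult_pos_pos mult_nonneg_nonpos)
  qed
  define e where "e = min (b/2) (- GG b / 2)"
  have e: "0 < e" "e < b" unfolding e_def using bpos neg by auto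
  have "\<exists>z. e < z \<and> z < b \<and> GG b - GG e = (b - e) * Gp z"
  proof (rule MVT2)
    show "e < b" using e by simp
    fix x assume "e \<le> x" "x \<le> b"
    then show "(GG has_real_derivative Gp x) (at x)" using GG_deriv bpos r1 e by auto
  qed
  then obtain xi where xi: "e < xi" "xi < b" "GG b - GG e = (b - e) * Gp xi" by blast
  have "0 < Gp xi" using pos[of xi] xi e eta by auto
  then have "0 < (b - e) * Gp xi" using xi by simp
  then have "GG e < GG b" using xi(3) by simp
  moreover have "- e \<le> GG e" using GG_eps[of e] e bpos r_def by auto
  moreover have "- e \<ge> GG b / 2" unfolding e_def by auto
  ultimately show False using neg by linarith
qed

end


lemma sum_list_filter_split:
  fixes f :: "real \<Rightarrow> real"
  shows "sum_list (map f (filter P xs)) + sum_list (map f (filter (\<lambda>x. \<not> P x) xs)) = sum_list (map f xs)"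
  by (induction xs) (auto simp: algebra_simps)

lemma ht_list:
  fixes k :: nat assumes k: "k \<ge> 1"
  shows "(\<forall>x\<in>set xs. 0 \<le> x) \<Longrightarrow> sum_list xs = 1 \<Longrightarrow> 0 \<le> sum_list (map (phi (real k)) xs)"
proof (induction "length xs" arbitrary: xs rule: less_induct)
  case less
  define K where "K = real k"
  have K1: "K \<ge> 1" using k K_def by simp
  define c where "c = htc K"
  have cb: "K \<le> c" "c \<le> K+1" using c_bounds[OF K1] c_def by auto
  define t where "t = 1/(2*c)"
  have cpos: "0 < c" using cb K1 by linarith
  have t_le: "t \<le> 1/(K+1)" unfolding t_def using cb K1 by (simp add: field_simps)
  have Kt: "K * t \<le> 1/2" unfolding t_def using cb cpos by (simp add: field_simps)
  have "1/(K+1) < 1" using K1 by (simp add: field_simps)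
  then have t_lt1: "t < 1" using t_le by linarith
  have tpos: "0 < t" unfolding t_def using cpos by simp
  define S where "S = filter (\<lambda>x. x \<le> t) xs"
  define B where "B = filter (\<lambda>x. \<not> x \<le> t) xs"
  have spl: "sum_list (map f xs) = sum_list (map f S) + sum_list (map f B)" for f :: "real \<Rightarrow> real"
    using sum_list_filter_split[of f "\<lambda>x. x \<le> t" xs] unfolding S_def B_def by simp
  have len: "length S + length B = length xs" unfolding S_def B_def by (rule sum_length_filter_compl)
  have nnS: "\<forall>x\<in>set S. 0 \<le> x \<and> x \<le> t" using less(2) unfolding S_def by auto
  have nnB: "\<forall>x\<in>set B. t < x" using less(2) unfolding B_def by auto
  have sumxs: "sum_list S + sum_list B = 1" using spl[of id] less(3) by simp
  show ?case
  proof (cases "2 \<le> length S")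
    case True
    then obtain x y S' where Sxy: "S = x # y # S'"
      by (auto simp: Suc_le_length_iff numeral_2_eq_2)
    define xs' where "xs' = (x+y) # S' @ B"
    have "length xs' < length xs" using len Sxy unfolding xs'_def by simp
    moreover have "\<forall>x\<in>set xs'. 0 \<le> x"
    proof
      fix z assume "z \<in> set xs'"
      then consider "z = x + y" | "z \<in> set S'" | "z \<in> set B" unfolding xs'_def by auto
      then show "0 \<le> z"
      proof cases
        case 1 then show ?thesis using nnS Sxy by (simp add: add_nonneg_nonneg)
      next
        case 2 then show ?thesis using nnS Sxy by simp
      next
        case 3 then show ?thesis using nnB tpos by force
      qed
    qed
    moreover have "sum_list xs' = 1" using sumxs Sxy unfolding xs'_def by simp
    ultimately have IH: "0 \<le> sum_list (map (phi (real k)) xs')" using less(1) by blast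
    have xy: "0 \<le> x" "0 \<le> y" "x + y \<le> 1 / htc K" using nnS Sxy unfolding t_def c_def by auto
    have "phi K (x+y) \<le> phi K x + phi K y" using phi_merge[OF K1 xy] .
    then have "sum_list (map (phi K) xs') \<le> sum_list (map (phi K) xs)"
      using spl[of "phi K"] Sxy unfolding xs'_def by simp
    then show ?thesis using IH K_def by simp
  next
    case False
    define b where "b = sum_list S"
    have "S = [] \<or> (\<exists>x. S = [x])" using False by (cases S) (auto simp: Suc_le_eq)
    then have Sphi: "sum_list (map (phi K) S) = phi K b" and b: "0 \<le> b" "b \<le> t"
      using nnS t_lt1 tpos unfolding b_def by (auto simp: phi_def)
    define m where "m = length B"
    have sB: "sum_list B = 1 - b" using sumxs b_def by simp
    have m0: "m \<noteq> 0"
    proof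
      assume "m = 0" then have "B = []" unfolding m_def by simp
      then show False using sB b t_lt1 by simp
    qed
    define a where "a = (1-b)/m"
    have jensen: "real m * phi K a \<le> sum_list (map (phi K) B)"
    proof -
      have "phi K (\<Sum>i\<in>{0..<m}. (1/m) *\<^sub>R (B!i)) \<le> (\<Sum>i\<in>{0..<m}. (1/m) * phi K (B!i))"
      proof (rule convex_on_sum[OF _ _ phi_convex[OF K1]])
        show "finite {0..<m}" by simp
        show "{0..<m} \<noteq> {}" using m0 by simp
        show "(\<Sum>i\<in>{0..<m}. 1 / real m) = 1" using m0 by simp
        show "\<And>i. i \<in> {0..<m} \<Longrightarrow> 0 \<le> 1 / real m" by simp
        fix i assume "i \<in> {0..<m}"
        then have "B!i \<in> set B" unfolding m_def by simp
        then show "B!i \<in> {1/(2*htc K)..}" using nnB unfolding t_def c_def by force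
      qed
      moreover have "(\<Sum>i\<in>{0..<m}. (1/m) *\<^sub>R (B!i)) = a"
        unfolding a_def using sB sum_list_sum_nth[of B] unfolding m_def
        by (simp add: sum_divide_distrib[symmetric])
      moreover have "(\<Sum>i\<in>{0..<m}. (1/m) * phi K (B!i)) = sum_list (map (phi K) B) / m"
        using sum_list_sum_nth[of "map (phi K) B"] unfolding m_def
        by (simp add: sum_divide_distrib[symmetric])
      ultimately have "phi K a \<le> sum_list (map (phi K) B) / m" by simp
      then have "real m * phi K a \<le> real m * (sum_list (map (phi K) B) / m)"
        by (rule mult_left_mono) simp
      then show ?thesis using m0 by simp
    qed
    have total: "sum_list (map (phi K) xs) \<ge> phi K b + real m * phi K a"
      using spl[of "phi K"] Sphi jensen by simp
    have phib: "0 \<le> phi K b" using phi_nonneg_low[OF K1 b(1)] b t_le by simp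
    consider "m \<ge> k+1" | "m = k" | "m < k" by linarith
    then have "0 \<le> phi K b + real m * phi K a"
    proof cases
      case 1
      have mk: "K + 1 \<le> real m" using 1 K_def by simp
      have "(1-b)/m \<le> 1/m" using b m0 by (simp add: divide_right_mono)
      also have "1/m \<le> 1/(K+1)" using mk K1 by (intro divide_left_mono) auto
      finally have "a \<le> 1/(K+1)" unfolding a_def .
      moreover have "0 \<le> a" unfolding a_def using b t_lt1 by simp
      ultimately have "0 \<le> phi K a" using phi_nonneg_low[OF K1] by simp
      then show ?thesis using phib by simp
    next
      case 2
      have "0 \<le> GG K b" using GG_nonneg[OF K1 b(1)] b t_le by simp
      moreover have "GG K b = K * phi K ((1-b)/K) + phi K b" by (simp add: GG_def[OF K1])
      ultimately show ?thesis unfolding a_def using 2 K_def by simp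
    next
      case 3
      have "real m \<le> K - 1" using 3 K_def by simp
      moreover have "K * b \<le> K * t" using b K1 by (intro mult_left_mono) auto
      then have "K - 1 \<le> K * (1 - b)" using Kt by (simp add: algebra_simps)
      ultimately have "1/K \<le> a" unfolding a_def using m0 K1
        by (simp add: field_simps)
      then have "0 \<le> phi K a" using phi_nonneg_high[OF K1] by simp
      then show ?thesis using phib by simp
    qed
    then show ?thesis using total K_def by simp
  qed
qed



lemma onb_complete:
  assumes onb: "orthonormal_basis d e" and a: "a < d" and a': "a' < d"
  shows "(\<Sum>i<d. e i a * cnj (e i a')) = (if a = a' then 1 else 0)"
proof -
  define X :: "complex mat" where "X = mat d d (\<lambda>(i,k). cnj (e i k))"
  define Y :: "complex mat" where "Y = mat d d (\<lambda>(k,j). e j k)"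
  have XC: "X \<in> carrier_mat d d" and YC: "Y \<in> carrier_mat d d" unfolding X_def Y_def by auto
  have "X * Y = 1\<^sub>m d"
  proof (rule eq_matI)
    fix i j assume ij: "i < dim_row (1\<^sub>m d :: complex mat)" "j < dim_col (1\<^sub>m d :: complex mat)"
    then have "(X * Y) $$ (i,j) = (\<Sum>k<d. cnj (e i k) * e j k)"
      unfolding X_def Y_def by (simp add: scalar_prod_def lessThan_atLeast0)
    also have "\<dots> = cinner d (e i) (e j)" unfolding cinner_def by simp
    also have "\<dots> = (if i = j then 1 else 0)" using onb ij unfolding orthonormal_basis_def by simp
    finally show "(X * Y) $$ (i,j) = 1\<^sub>m d $$ (i,j)" using ij by simp
  qed (auto simp: X_def Y_def)
  then have YX: "Y * X = 1\<^sub>m d" by (rule mat_mult_left_right_inverse[OF XC YC])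
  have "(Y * X) $$ (a,a') = (\<Sum>i<d. e i a * cnj (e i a'))"
    using a a' unfolding X_def Y_def by (simp add: scalar_prod_def lessThan_atLeast0)
  then show ?thesis using YX a a' by simp
qed

lemma density_herm: "density_op d \<sigma> \<Longrightarrow> i < d \<Longrightarrow> j < d \<Longrightarrow> \<sigma> i j = cnj (\<sigma> j i)"
  unfolding density_op_def by blast
lemma density_psd: "density_op d \<sigma> \<Longrightarrow> 0 \<le> Re (\<Sum>i<d. \<Sum>j<d. cnj (v i) * \<sigma> i j * v j)"
  unfolding density_op_def by blast
lemma density_tr: "density_op d \<sigma> \<Longrightarrow> (\<Sum>i<d. \<sigma> i i) = 1"
  unfolding density_op_def by blast

definition qf :: "nat \<Rightarrow> (nat \<Rightarrow> nat \<Rightarrow> complex) \<Rightarrow> (nat \<Rightarrow> complex) \<Rightarrow> complex" where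
  "qf d \<sigma> u = (\<Sum>a<d. \<Sum>a'<d. cnj (u a) * \<sigma> a a' * u a')"

lemma qf_real:
  assumes "density_op d \<sigma>" shows "cnj (qf d \<sigma> u) = qf d \<sigma> u"
proof -
  have herm: "cnj (\<sigma> i j) = \<sigma> j i" if "i < d" "j < d" for i j
  proof -
    have "\<sigma> j i = cnj (\<sigma> i j)" using density_herm[OF assms that(2,1)] .
    then show ?thesis by simp
  qed
  have "cnj (qf d \<sigma> u) = (\<Sum>a<d. \<Sum>a'<d. u a * cnj (\<sigma> a a') * cnj (u a'))"
    unfolding qf_def by simp
  also have "\<dots> = (\<Sum>a<d. \<Sum>a'<d. u a * \<sigma> a' a * cnj (u a'))"
    using herm by (intro sum.cong refl) auto
  also have "\<dots> = (\<Sum>a'<d. \<Sum>a<d. cnj (u a') * \<sigma> a' a * u a)"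
    by (subst sum.swap) (simp add: mult_ac)
  finally show ?thesis unfolding qf_def .
qed

lemma real_of_cnj_eq: "cnj (z::complex) = z \<Longrightarrow> z = complex_of_real (Re z)"
proof -
  assume h: "cnj z = z"
  have "Im (cnj z) = Im z" using h by simp
  then have "Im z = 0" by simp
  then show ?thesis by (simp add: complex_eq_iff)
qed

lemma qf_of_real: "density_op d \<sigma> \<Longrightarrow> qf d \<sigma> u = complex_of_real (Re (qf d \<sigma> u))"
  using qf_real[of d \<sigma> u] by (rule real_of_cnj_eq)

lemma qf_nonneg: "density_op d \<sigma> \<Longrightarrow> 0 \<le> Re (qf d \<sigma> u)"
  unfolding qf_def by (rule density_psd)

lemma qf_sum:
  assumes dens: "density_op d \<sigma>" and onb: "orthonormal_basis d e"
  shows "(\<Sum>i<d. Re (qf d \<sigma> (e i))) = 1"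
proof -
  have "(\<Sum>i<d. qf d \<sigma> (e i)) = (\<Sum>i<d. \<Sum>a<d. \<Sum>a'<d. \<sigma> a a' * (e i a' * cnj (e i a)))"
    unfolding qf_def by (simp add: mult_ac)
  also have "\<dots> = (\<Sum>a<d. \<Sum>i<d. \<Sum>a'<d. \<sigma> a a' * (e i a' * cnj (e i a)))"
    by (rule sum.swap)
  also have "\<dots> = (\<Sum>a<d. \<Sum>a'<d. \<Sum>i<d. \<sigma> a a' * (e i a' * cnj (e i a)))"
    by (rule sum.cong[OF refl], rule sum.swap)
  also have "\<dots> = (\<Sum>a<d. \<Sum>a'<d. \<sigma> a a' * (\<Sum>i<d. e i a' * cnj (e i a)))"
    by (simp add: sum_distrib_left)
  also have "\<dots> = (\<Sum>a<d. \<Sum>a'<d. (if a' = a then \<sigma> a a' else 0))"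
    using onb_complete[OF onb] by (intro sum.cong refl) auto
  also have "\<dots> = (\<Sum>a<d. \<sigma> a a)" by (intro sum.cong refl) (simp add: sum.delta)
  also have "\<dots> = 1" using density_tr[OF dens] .
  finally have "(\<Sum>i<d. qf d \<sigma> (e i)) = 1" .
  then have "Re (\<Sum>i<d. qf d \<sigma> (e i)) = 1" by simp
  then show ?thesis by (simp add: Re_sum)
qed



lemma sum_two_point:
  fixes F :: "nat \<Rightarrow> complex"
  assumes "a < d" "a' < d" "a \<noteq> a'"
  shows "(\<Sum>j<d. F j * (x * (if j = a then 1 else 0) + y * (if j = a' then 1 else 0))) = x * F a + y * F a'"
proof -
  have "(\<Sum>j<d. F j * (x * (if j = a then 1 else 0) + y * (if j = a' then 1 else 0)))
      = (\<Sum>j<d. (if j = a then x * F a else 0) + (if j = a' then y * F a' else 0))"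
    using assms by (intro sum.cong refl) auto
  also have "\<dots> = x * F a + y * F a'" using assms by (simp add: sum.distrib sum.delta)
  finally show ?thesis .
qed

lemma sum_two_point_left:
  fixes G :: "nat \<Rightarrow> complex"
  assumes "a < d" "a' < d" "a \<noteq> a'"
  shows "(\<Sum>i<d. cnj (x * (if i = a then 1 else 0) + y * (if i = a' then 1 else 0)) * G i) = cnj x * G a + cnj y * G a'"
proof -
  have "(\<Sum>i<d. cnj (x * (if i = a then 1 else 0) + y * (if i = a' then 1 else 0)) * G i)
      = (\<Sum>i<d. (if i = a then cnj x * G a else 0) + (if i = a' then cnj y * G a' else 0))"
    using assms by (intro sum.cong refl) auto
  also have "\<dots> = cnj x * G a + cnj y * G a'" using assms by (simp add: sum.distrib sum.delta)
  finally show ?thesis .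
qed

lemma diag_real: "density_op d \<sigma> \<Longrightarrow> a < d \<Longrightarrow> \<sigma> a a = complex_of_real (Re (\<sigma> a a))"
  using density_herm[of d \<sigma> a a] by (metis real_of_cnj_eq)

lemma diag_nonneg: "density_op d \<sigma> \<Longrightarrow> a < d \<Longrightarrow> 0 \<le> Re (\<sigma> a a)"
proof -
  assume dens: "density_op d \<sigma>" and a: "a < d"
  define v :: "nat \<Rightarrow> complex" where "v = (\<lambda>j. if j = a then 1 else 0)"
  have "(\<Sum>i<d. \<Sum>j<d. cnj (v i) * \<sigma> i j * v j) = (\<Sum>i<d. cnj (v i) * \<sigma> i a)"
    unfolding v_def using a by (intro sum.cong refl) (simp add: if_distrib sum.delta cong: if_cong)
  also have "\<dots> = (\<Sum>i<d. if i = a then \<sigma> a a else 0)" unfolding v_def by (intro sum.cong refl) auto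
  also have "\<dots> = \<sigma> a a" using a by (simp add: sum.delta)
  finally show ?thesis using density_psd[OF dens, of v] by simp
qed

lemma psd_2x2:
  assumes dens: "density_op d \<sigma>" and a: "a < d" "a' < d" "a \<noteq> a'"
  shows "(cmod (\<sigma> a a'))^2 \<le> Re (\<sigma> a a) * Re (\<sigma> a' a')"
proof -
  define \<alpha> where "\<alpha> = Re (\<sigma> a a)"
  define \<gamma> where "\<gamma> = Re (\<sigma> a' a')"
  define \<beta> where "\<beta> = \<sigma> a a'"
  have sa: "\<sigma> a a = complex_of_real \<alpha>" unfolding \<alpha>_def using diag_real[OF dens a(1)] .
  have sg: "\<sigma> a' a' = complex_of_real \<gamma>" unfolding \<gamma>_def using diag_real[OF dens a(2)] .
  have sb: "\<sigma> a' a = cnj \<beta>" unfolding \<beta>_def using density_herm[OF dens a(2) a(1)] .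
  have form: "(cmod \<beta>)^2 * (- 2 * s * w) + s^2 * \<alpha> + w^2 * (cmod \<beta>)^2 * \<gamma> \<ge> 0" for s w :: real
  proof -
    define x :: complex where "x = complex_of_real s"
    define y :: complex where "y = - complex_of_real w * cnj \<beta>"
    define v where "v = (\<lambda>j. x * (if j = a then 1 else 0) + y * (if j = a' then 1 else 0))"
    have "(\<Sum>i<d. \<Sum>j<d. cnj (v i) * \<sigma> i j * v j) = (\<Sum>i<d. cnj (v i) * (x * \<sigma> i a + y * \<sigma> i a'))"
      unfolding v_def using sum_two_point[OF a, of "\<lambda>j. \<sigma> _ j"]
      by (intro sum.cong refl) (simp add: sum_distrib_left[symmetric] mult.assoc)
    also have "\<dots> = cnj x * (x * \<sigma> a a + y * \<sigma> a a') + cnj y * (x * \<sigma> a' a + y * \<sigma> a' a')"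
      unfolding v_def by (rule sum_two_point_left[OF a])
    also have "\<dots> = (\<beta> * cnj \<beta>) * complex_of_real (- 2 * s * w) + complex_of_real (s^2 * \<alpha>) + complex_of_real (w^2 * \<gamma>) * (\<beta> * cnj \<beta>)"
      unfolding x_def y_def sa sg sb \<beta>_def[symmetric]
      by (simp add: algebra_simps power2_eq_square)
    also have "\<dots> = complex_of_real ((cmod \<beta>)^2 * (- 2 * s * w) + s^2 * \<alpha> + w^2 * (cmod \<beta>)^2 * \<gamma>)"
      unfolding complex_norm_square[symmetric] by simp
    finally show ?thesis using density_psd[OF dens, of v] by simp
  qed
  have al: "0 \<le> \<alpha>" "0 \<le> \<gamma>" unfolding \<alpha>_def \<gamma>_def using diag_nonneg[OF dens] a by auto
  show ?thesis
  proof (cases "\<gamma> = 0")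
    case False
    then have gp: "0 < \<gamma>" using al by simp
    have "0 \<le> \<gamma> * (\<gamma> * \<alpha> - (cmod \<beta>)^2)" using form[of \<gamma> 1] by (simp add: algebra_simps power2_eq_square)
    then have "0 \<le> \<gamma> * \<alpha> - (cmod \<beta>)^2" using gp by (simp add: zero_le_mult_iff)
    then show ?thesis unfolding \<alpha>_def \<gamma>_def \<beta>_def by (simp add: algebra_simps)
  next
    case True
    have "\<beta> = 0"
    proof (rule ccontr)
      assume "\<beta> \<noteq> 0"
      then have bp: "0 < (cmod \<beta>)^2" by simp
      have "0 \<le> (cmod \<beta>)^2 * (- 2 * 1 * ((\<alpha>+1)/(2 * (cmod \<beta>)^2))) + 1^2 * \<alpha> + 0"
        using form[of 1 "(\<alpha>+1)/(2 * (cmod \<beta>)^2)"] True by simp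
      moreover have "(cmod \<beta>)^2 * (- 2 * 1 * ((\<alpha>+1)/(2 * (cmod \<beta>)^2))) = - (\<alpha> + 1)"
        using bp by (simp add: field_simps)
      ultimately show False by simp
    qed
    then show ?thesis using True al unfolding \<alpha>_def \<gamma>_def \<beta>_def by simp
  qed
qed

lemma entry_bound:
  assumes dens: "density_op d \<sigma>" and a: "a < d" "a' < d"
  shows "(cmod (\<sigma> a a'))^2 \<le> Re (\<sigma> a a) * Re (\<sigma> a' a')"
proof (cases "a = a'")
  case True
  have "\<sigma> a a = complex_of_real (Re (\<sigma> a a))" using diag_real[OF dens a(1)] .
  then have "cmod (\<sigma> a a) = \<bar>Re (\<sigma> a a)\<bar>" by (metis norm_of_real)
  then show ?thesis using True by (simp add: power2_eq_square)
next
  case False then show ?thesis using psd_2x2[OF dens a] by simp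
qed

lemma hs_self_le:
  assumes dens: "density_op d \<sigma>"
  shows "(\<Sum>a<d. \<Sum>a'<d. (cmod (\<sigma> a a'))^2) \<le> 1"
proof -
  have "(\<Sum>a<d. \<Sum>a'<d. (cmod (\<sigma> a a'))^2) \<le> (\<Sum>a<d. \<Sum>a'<d. Re (\<sigma> a a) * Re (\<sigma> a' a'))"
    using entry_bound[OF dens] by (intro sum_mono) auto
  also have "\<dots> = (\<Sum>a<d. Re (\<sigma> a a)) * (\<Sum>a'<d. Re (\<sigma> a' a'))"
    by (simp add: sum_product)
  also have "(\<Sum>a<d. Re (\<sigma> a a)) = 1"
    using density_tr[OF dens] by (metis Re_sum one_complex.sel)
  finally show ?thesis by simp
qed



definition hs :: "nat \<Rightarrow> (nat \<Rightarrow> nat \<Rightarrow> complex) \<Rightarrow> (nat \<Rightarrow> nat \<Rightarrow> complex) \<Rightarrow> complex" where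
  "hs d A B = (\<Sum>a<d. \<Sum>a'<d. cnj (A a a') * B a a')"

definition Pj :: "(nat \<Rightarrow> complex) \<Rightarrow> nat \<Rightarrow> nat \<Rightarrow> complex" where
  "Pj u = (\<lambda>a a'. u a * cnj (u a'))"

definition Idm :: "nat \<Rightarrow> nat \<Rightarrow> complex" where
  "Idm = (\<lambda>a a'. if a = a' then 1 else 0)"

lemma hs_sum_right: "hs d A (\<lambda>a a'. \<Sum>k\<in>I. f k a a') = (\<Sum>k\<in>I. hs d A (f k))"
proof -
  have "hs d A (\<lambda>a a'. \<Sum>k\<in>I. f k a a') = (\<Sum>a<d. \<Sum>a'<d. \<Sum>k\<in>I. cnj (A a a') * f k a a')"
    unfolding hs_def by (simp add: sum_distrib_left)
  also have "\<dots> = (\<Sum>a<d. \<Sum>k\<in>I. \<Sum>a'<d. cnj (A a a') * f k a a')"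
    by (rule sum.cong[OF refl], rule sum.swap)
  also have "\<dots> = (\<Sum>k\<in>I. \<Sum>a<d. \<Sum>a'<d. cnj (A a a') * f k a a')"
    by (rule sum.swap)
  finally show ?thesis unfolding hs_def .
qed

lemma hs_sum_left: "hs d (\<lambda>a a'. \<Sum>k\<in>I. f k a a') B = (\<Sum>k\<in>I. hs d (f k) B)"
proof -
  have "hs d (\<lambda>a a'. \<Sum>k\<in>I. f k a a') B = (\<Sum>a<d. \<Sum>a'<d. \<Sum>k\<in>I. cnj (f k a a') * B a a')"
    unfolding hs_def by (simp add: sum_distrib_right)
  also have "\<dots> = (\<Sum>a<d. \<Sum>k\<in>I. \<Sum>a'<d. cnj (f k a a') * B a a')"
    by (rule sum.cong[OF refl], rule sum.swap)
  also have "\<dots> = (\<Sum>k\<in>I. \<Sum>a<d. \<Sum>a'<d. cnj (f k a a') * B a a')"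
    by (rule sum.swap)
  finally show ?thesis unfolding hs_def .
qed

lemma hs_scale_right: "hs d A (\<lambda>a a'. c * B a a') = c * hs d A B"
  unfolding hs_def by (simp add: sum_distrib_left mult_ac)

lemma hs_scale_left: "hs d (\<lambda>a a'. c * A a a') B = cnj c * hs d A B"
  unfolding hs_def by (simp add: sum_distrib_left mult_ac)

lemma hs_diff_right: "hs d A (\<lambda>a a'. B a a' - C a a') = hs d A B - hs d A C"
  unfolding hs_def by (simp add: sum_subtractf right_diff_distrib)

lemma hs_diff_left: "hs d (\<lambda>a a'. A a a' - B a a') C = hs d A C - hs d B C"
  unfolding hs_def by (simp add: sum_subtractf left_diff_distrib)

lemma hs_swap: "hs d B A = cnj (hs d A B)"
  unfolding hs_def by (simp add: mult.commute)

lemma hs_self: "hs d A A = complex_of_real (\<Sum>a<d. \<Sum>a'<d. (cmod (A a a'))^2)"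
proof -
  have "hs d A A = (\<Sum>a<d. \<Sum>a'<d. complex_of_real ((cmod (A a a'))^2))"
    unfolding hs_def by (intro sum.cong refl) (simp only: complex_norm_square mult.commute)
  then show ?thesis by simp
qed

lemma hs_sigma_P: "density_op d \<sigma> \<Longrightarrow> hs d \<sigma> (Pj u) = qf d \<sigma> u"
proof -
  assume dens: "density_op d \<sigma>"
  have "hs d \<sigma> (Pj u) = (\<Sum>a<d. \<Sum>a'<d. cnj (u a') * \<sigma> a' a * u a)"
    unfolding hs_def Pj_def
  proof (intro sum.cong refl)
    fix a a' assume "a \<in> {..<d}" "a' \<in> {..<d}"
    then have "cnj (\<sigma> a a') = \<sigma> a' a" using density_herm[OF dens, of a' a] by simp
    then show "cnj (\<sigma> a a') * (u a * cnj (u a')) = cnj (u a') * \<sigma> a' a * u a" by (simp add: mult_ac)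
  qed
  also have "\<dots> = qf d \<sigma> u" unfolding qf_def by (rule sum.swap)
  finally show ?thesis .
qed

lemma hs_sigma_Id: "density_op d \<sigma> \<Longrightarrow> hs d \<sigma> Idm = 1"
proof -
  assume dens: "density_op d \<sigma>"
  have "hs d \<sigma> Idm = (\<Sum>a<d. cnj (\<sigma> a a))"
    unfolding hs_def Idm_def by (intro sum.cong refl) (simp add: if_distrib sum.delta cong: if_cong)
  also have "\<dots> = cnj (\<Sum>a<d. \<sigma> a a)" by simp
  finally show ?thesis using density_tr[OF dens] by simp
qed

lemma hs_P_P: "hs d (Pj u) (Pj v) = cinner d u v * cnj (cinner d u v)"
proof -
  have "hs d (Pj u) (Pj v) = (\<Sum>a<d. \<Sum>a'<d. (cnj (u a) * v a) * (u a' * cnj (v a')))"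
    unfolding hs_def Pj_def by (intro sum.cong refl) (simp add: mult_ac)
  also have "\<dots> = (\<Sum>a<d. cnj (u a) * v a) * (\<Sum>a'<d. u a' * cnj (v a'))"
    by (simp add: sum_product)
  finally show ?thesis unfolding cinner_def by simp
qed

lemma hs_P_Id: "hs d (Pj u) Idm = cinner d u u"
  unfolding hs_def Pj_def Idm_def cinner_def
  by (intro sum.cong refl) (simp add: if_distrib sum.delta cong: if_cong)

lemma hs_Id_P: "hs d Idm (Pj u) = cnj (cinner d u u)"
  using hs_P_Id[of d u] hs_swap[of d Idm "Pj u"] by simp

lemma hs_Id_Id: "hs d Idm Idm = of_nat d"
  unfolding hs_def Idm_def
  by (simp add: if_distrib sum.delta cong: if_cong)



lemma qf_sum_c:
  assumes dens: "density_op d \<sigma>" and onb: "orthonormal_basis d e"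
  shows "(\<Sum>i<d. qf d \<sigma> (e i)) = 1"
proof -
  have "(\<Sum>i<d. qf d \<sigma> (e i)) = (\<Sum>i<d. complex_of_real (Re (qf d \<sigma> (e i))))"
    using qf_of_real[OF dens] by (intro sum.cong refl) auto
  also have "\<dots> = complex_of_real (\<Sum>i<d. Re (qf d \<sigma> (e i)))" by simp
  also have "\<dots> = 1" using qf_sum[OF dens onb] by simp
  finally show ?thesis .
qed

lemma mub_onb: "mutually_unbiased d M e \<Longrightarrow> m < M \<Longrightarrow> orthonormal_basis d (e m)"
  unfolding mutually_unbiased_def by blast

lemma mub_unb: "mutually_unbiased d M e \<Longrightarrow> m < M \<Longrightarrow> n < M \<Longrightarrow> m \<noteq> n \<Longrightarrow> i < d \<Longrightarrow> j < d
  \<Longrightarrow> (cmod (cinner d (e m i) (e n j)))^2 = 1 / real d"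
  unfolding mutually_unbiased_def by blast

lemma onb_inner: "orthonormal_basis d e \<Longrightarrow> i < d \<Longrightarrow> j < d \<Longrightarrow> cinner d (e i) (e j) = (if i = j then 1 else 0)"
  unfolding orthonormal_basis_def by blast

lemma mub_ic:
  assumes dens: "density_op d \<sigma>" and mub: "mutually_unbiased d M e" and d: "0 < d"
  shows "(\<Sum>m<M. \<Sum>i<d. (Re (qf d \<sigma> (e m i)))^2) \<le> (real d + real M - 1) / real d"
proof -
  note onb = mub_onb[OF mub]
  define p where "p m i = Re (qf d \<sigma> (e m i))" for m i
  define pc where "pc m i = qf d \<sigma> (e m i)" for m i
  have pc: "pc m i = complex_of_real (p m i)" for m i unfolding pc_def p_def using qf_of_real[OF dens] .
  define \<gamma> where "\<gamma> = (real M - 1) / real d"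
  define Q where "Q = (\<lambda>a a'. \<Sum>m<M. \<Sum>i<d. pc m i * Pj (e m i) a a')"
  define T where "T = (\<lambda>a a'. Q a a' - complex_of_real \<gamma> * Idm a a')"
  define S where "S = (\<Sum>m<M. \<Sum>i<d. (p m i)^2)"
  have psum: "(\<Sum>i<d. pc m i) = 1" if "m < M" for m
    unfolding pc_def using qf_sum_c[OF dens onb[OF that]] .
  have hsQr: "hs d B Q = (\<Sum>m<M. \<Sum>i<d. pc m i * hs d B (Pj (e m i)))" for B
    unfolding Q_def hs_sum_right hs_scale_right ..
  have hsQl: "hs d Q B = (\<Sum>m<M. \<Sum>i<d. cnj (pc m i) * hs d (Pj (e m i)) B)" for B
    unfolding Q_def hs_sum_left hs_scale_left ..
  have a1: "hs d \<sigma> Q = complex_of_real S"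
  proof -
    have "hs d \<sigma> Q = (\<Sum>m<M. \<Sum>i<d. complex_of_real ((p m i)^2))"
      unfolding hsQr hs_sigma_P[OF dens] by (simp add: pc[symmetric] pc_def power2_eq_square)
    then show ?thesis unfolding S_def by simp
  qed
  have a2: "hs d \<sigma> T = complex_of_real (S - \<gamma>)"
    unfolding T_def hs_diff_right hs_scale_right a1 hs_sigma_Id[OF dens] by simp
  have a3: "hs d T \<sigma> = complex_of_real (S - \<gamma>)"
  proof -
    have "hs d T \<sigma> = cnj (hs d \<sigma> T)" by (rule hs_swap)
    then show ?thesis unfolding a2 by simp
  qed
  have PP: "(\<Sum>n<M. \<Sum>j<d. pc n j * hs d (Pj (e m i)) (Pj (e n j))) = pc m i + complex_of_real \<gamma>"
    if mi: "m < M" "i < d" for m i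
  proof -
    define f where "f n = (\<Sum>j<d. pc n j * hs d (Pj (e m i)) (Pj (e n j)))" for n
    have fm: "f m = pc m i"
    proof -
      have "f m = (\<Sum>j<d. if j = i then pc m i else 0)"
        unfolding f_def hs_P_P using onb_inner[OF onb[OF mi(1)] mi(2)]
        by (intro sum.cong refl) auto
      then show ?thesis using mi by (simp add: sum.delta')
    qed
    have fn: "f n = complex_of_real (1 / real d)" if n: "n < M" "n \<noteq> m" for n
    proof -
      have "f n = (\<Sum>j<d. pc n j * complex_of_real (1 / real d))"
        unfolding f_def hs_P_P
      proof (intro sum.cong refl)
        fix j assume j: "j \<in> {..<d}"
        have "cinner d (e m i) (e n j) * cnj (cinner d (e m i) (e n j))
            = complex_of_real ((cmod (cinner d (e m i) (e n j)))^2)"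
          by (simp only: complex_norm_square)
        also have "\<dots> = complex_of_real (1 / real d)"
          using mub_unb[OF mub mi(1) n(1) _ mi(2)] n j by auto
        finally show "pc n j * (cinner d (e m i) (e n j) * cnj (cinner d (e m i) (e n j)))
           = pc n j * complex_of_real (1 / real d)" by simp
      qed
      also have "\<dots> = (\<Sum>j<d. pc n j) * complex_of_real (1 / real d)" by (rule sum_distrib_right[symmetric])
      finally show ?thesis using psum[OF n(1)] by simp
    qed
    have "(\<Sum>n<M. f n) = f m + (\<Sum>n\<in>{..<M} - {m}. f n)"
      using mi by (simp add: sum.remove)
    also have "(\<Sum>n\<in>{..<M} - {m}. f n) = (\<Sum>n\<in>{..<M} - {m}. complex_of_real (1 / real d))"
      using fn by (intro sum.cong refl) auto
    also have "\<dots> = of_nat (M - 1) * complex_of_real (1 / real d)"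
      using mi by simp
    also have "of_nat (M - 1) * complex_of_real (1 / real d) = complex_of_real \<gamma>"
      unfolding \<gamma>_def using mi by (simp add: of_nat_diff)
    finally show ?thesis unfolding f_def fm[unfolded f_def] .
  qed
  have pM: "(\<Sum>m<M. \<Sum>i<d. pc m i) = of_nat M" using psum by simp
  have c1: "hs d Q Q = complex_of_real (S + \<gamma> * real M)"
  proof -
    have "hs d Q Q = (\<Sum>m<M. \<Sum>i<d. cnj (pc m i) * (pc m i + complex_of_real \<gamma>))"
      unfolding hsQl hsQr[of "Pj _"] using PP by (intro sum.cong refl) auto
    also have "\<dots> = (\<Sum>m<M. \<Sum>i<d. complex_of_real ((p m i)^2) + complex_of_real \<gamma> * pc m i)"
      by (intro sum.cong refl) (simp add: pc power2_eq_square algebra_simps)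
    also have "\<dots> = complex_of_real S + complex_of_real \<gamma> * (\<Sum>m<M. \<Sum>i<d. pc m i)"
      unfolding S_def by (simp add: sum.distrib sum_distrib_left)
    finally show ?thesis using pM by simp
  qed
  have c2: "hs d Q Idm = of_nat M"
  proof -
    have "hs d Q Idm = (\<Sum>m<M. \<Sum>i<d. cnj (pc m i))"
      unfolding hsQl hs_P_Id using onb_inner[OF onb] by (intro sum.cong refl) auto
    also have "\<dots> = cnj (\<Sum>m<M. \<Sum>i<d. pc m i)" by simp
    finally show ?thesis using pM by simp
  qed
  have c3: "hs d Idm Q = of_nat M"
  proof -
    have "hs d Idm Q = (\<Sum>m<M. \<Sum>i<d. pc m i)"
      unfolding hsQr hs_Id_P using onb_inner[OF onb] by (intro sum.cong refl) auto
    then show ?thesis using pM by simp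
  qed
  have c: "hs d T T = complex_of_real (S - \<gamma> * real M + \<gamma>^2 * real d)"
    unfolding T_def hs_diff_right hs_diff_left hs_scale_right hs_scale_left c1 c2 c3 hs_Id_Id
    by (simp add: power2_eq_square algebra_simps)
  define D where "D = (\<lambda>a a'. \<sigma> a a' - T a a')"
  have "hs d D D = hs d \<sigma> \<sigma> - hs d T \<sigma> - (hs d \<sigma> T - hs d T T)"
    unfolding D_def hs_diff_right hs_diff_left ..
  then have "complex_of_real (\<Sum>a<d. \<Sum>a'<d. (cmod (D a a'))^2)
      = complex_of_real (\<Sum>a<d. \<Sum>a'<d. (cmod (\<sigma> a a'))^2) - complex_of_real (S - \<gamma>)
        - (complex_of_real (S - \<gamma>) - complex_of_real (S - \<gamma> * real M + \<gamma>^2 * real d))"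
    unfolding a2 a3 c unfolding hs_self .
  then have eq: "(\<Sum>a<d. \<Sum>a'<d. (cmod (D a a'))^2)
      = (\<Sum>a<d. \<Sum>a'<d. (cmod (\<sigma> a a'))^2) - (S - \<gamma>) - ((S - \<gamma>) - (S - \<gamma> * real M + \<gamma>^2 * real d))"
    by (simp only: of_real_diff[symmetric] of_real_eq_iff)
  have "0 \<le> (\<Sum>a<d. \<Sum>a'<d. (cmod (D a a'))^2)" by (intro sum_nonneg) auto
  then have "S \<le> (\<Sum>a<d. \<Sum>a'<d. (cmod (\<sigma> a a'))^2) + 2 * \<gamma> - \<gamma> * real M + \<gamma>^2 * real d"
    using eq by linarith
  also have "\<gamma>^2 * real d = \<gamma> * (real M - 1)" unfolding \<gamma>_def using d by (simp add: power2_eq_square)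
  finally have "S \<le> (\<Sum>a<d. \<Sum>a'<d. (cmod (\<sigma> a a'))^2) + \<gamma>" by (simp add: algebra_simps)
  then have "S \<le> 1 + \<gamma>" using hs_self_le[OF dens] by linarith
  also have "1 + \<gamma> = (real d + real M - 1) / real d" unfolding \<gamma>_def using d by (simp add: field_simps)
  finally show ?thesis unfolding S_def p_def .
qed



lemma ht_fun:
  fixes k n :: nat and p :: "nat \<Rightarrow> real"
  assumes k: "k \<ge> 1" and nn: "\<And>i. i < n \<Longrightarrow> 0 \<le> p i" and s1: "(\<Sum>i<n. p i) = 1"
  shows "log 2 (real k) + (real k + 1) * (1 - real k * (\<Sum>i<n. (p i)^2)) * log 2 (1 + 1 / real k)
     \<le> - (\<Sum>i<n. p i * log 2 (p i))"
proof -
  define K where "K = real k"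
  have K1: "K \<ge> 1" using k K_def by simp
  define xs where "xs = map p [0..<n]"
  have "\<forall>x\<in>set xs. 0 \<le> x" using nn unfolding xs_def by auto
  moreover have "sum_list xs = 1" using s1 unfolding xs_def
    by (simp add: sum_list_sum_nth atLeast0LessThan)
  ultimately have "0 \<le> sum_list (map (phi K) xs)" using ht_list[OF k] K_def by simp
  also have "sum_list (map (phi K) xs) = (\<Sum>i<n. phi K (p i))"
    unfolding xs_def by (simp add: sum_list_sum_nth atLeast0LessThan)
  also have "\<dots> = (\<Sum>i<n. - (p i * ln (p i)) + htc K * (p i)^2 - htA K * p i)"
    unfolding phi_def hh_def by (intro sum.cong refl) (simp add: algebra_simps power2_eq_square)
  also have "\<dots> = - (\<Sum>i<n. p i * ln (p i)) + htc K * (\<Sum>i<n. (p i)^2) - htA K"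
    using s1 by (simp add: sum.distrib sum_subtractf sum_distrib_left[symmetric] sum_negf)
  finally have main: "htA K - htc K * (\<Sum>i<n. (p i)^2) \<le> - (\<Sum>i<n. p i * ln (p i))" by simp
  have l2: "0 < ln (2::real)" by simp
  have "htA K - htc K * (\<Sum>i<n. (p i)^2) = ln K + (K + 1) * (1 - K * (\<Sum>i<n. (p i)^2)) * htL K"
    unfolding htA_def htc_def by (simp add: algebra_simps)
  with main have "ln K + (K + 1) * (1 - K * (\<Sum>i<n. (p i)^2)) * htL K \<le> - (\<Sum>i<n. p i * ln (p i))"
    by simp
  then have "(ln K + (K + 1) * (1 - K * (\<Sum>i<n. (p i)^2)) * htL K) / ln 2 \<le> (- (\<Sum>i<n. p i * ln (p i))) / ln 2"
    using l2 by (intro divide_right_mono) auto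
  then have "(ln K + (K + 1) * (1 - K * (\<Sum>i<n. (p i)^2)) * htL K) / ln 2 \<le> - (\<Sum>i<n. p i * ln (p i)) / ln 2"
    by simp
  moreover have "(ln K + (K + 1) * (1 - K * (\<Sum>i<n. (p i)^2)) * htL K) / ln 2
      = log 2 K + (K + 1) * (1 - K * (\<Sum>i<n. (p i)^2)) * log 2 (1 + 1 / K)"
    unfolding log_def htL_def by (simp add: add_divide_distrib)
  moreover have "- (\<Sum>i<n. p i * ln (p i)) / ln 2 = - (\<Sum>i<n. p i * log 2 (p i))"
    unfolding log_def by (simp add: sum_divide_distrib)
  ultimately show ?thesis unfolding K_def by simp
qed

lemma xlnx_tangent: "0 \<le> x \<Longrightarrow> 0 < y \<Longrightarrow> x * ln y + x - y \<le> x * ln (x::real)"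
proof (cases "x = 0")
  case False
  assume x: "0 \<le> x" and y: "0 < y"
  then have xp: "0 < x" using False by simp
  have "1 - 1/(x/y) \<le> ln (x/y)" using xp y by (intro ln_ge_one_minus_inv) simp
  then have "1 - y/x \<le> ln x - ln y" using xp y by (simp add: ln_div)
  then have "x * (1 - y/x) \<le> x * (ln x - ln y)" using xp by (intro mult_left_mono) auto
  then show ?thesis using xp by (simp add: algebra_simps)
qed simp

lemma xlnx_concave:
  fixes q x :: "nat \<Rightarrow> real"
  assumes q: "\<And>j. j < J \<Longrightarrow> 0 \<le> q j" and qs: "(\<Sum>j<J. q j) = 1" and x: "\<And>j. j < J \<Longrightarrow> 0 \<le> x j"
  shows "(\<Sum>j<J. q j * x j) * ln (\<Sum>j<J. q j * x j) \<le> (\<Sum>j<J. q j * (x j * ln (x j)))"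
proof -
  define y where "y = (\<Sum>j<J. q j * x j)"
  have y0: "0 \<le> y" unfolding y_def using q x by (intro sum_nonneg) auto
  show ?thesis
  proof (cases "y = 0")
    case True
    have "\<forall>j\<in>{..<J}. q j * x j = 0"
      using True unfolding y_def by (subst sum_nonneg_eq_0_iff[symmetric]) (use q x in auto)
    then have "(\<Sum>j<J. q j * (x j * ln (x j))) = 0" by (intro sum.neutral) auto
    then show ?thesis using True unfolding y_def by simp
  next
    case False
    then have yp: "0 < y" using y0 by simp
    have "(\<Sum>j<J. q j * (x j * ln y + x j - y)) \<le> (\<Sum>j<J. q j * (x j * ln (x j)))"
      using xlnx_tangent[OF _ yp] q x by (intro sum_mono mult_left_mono) auto
    moreover have "(\<Sum>j<J. q j * (x j * ln y + x j - y)) = (\<Sum>j<J. (q j * x j) * ln y) + (\<Sum>j<J. q j * x j) - (\<Sum>j<J. q j) * y"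
      by (simp add: algebra_simps sum.distrib sum_subtractf sum_distrib_right sum_distrib_left)
    moreover have "(\<Sum>j<J. (q j * x j) * ln y) = y * ln y" unfolding y_def by (simp add: sum_distrib_right)
    moreover have "(\<Sum>j<J. q j * x j) = y" unfolding y_def ..
    ultimately show ?thesis using qs unfolding y_def by simp
  qed
qed

lemma xlnx_prod: "0 \<le> a \<Longrightarrow> 0 \<le> b \<Longrightarrow> (a * b) * ln (a * b) = a * b * ln a + a * b * ln (b::real)"
  by (cases "a = 0 \<or> b = 0") (auto simp: ln_mult algebra_simps)



lemma party_bound:
  assumes dens: "density_op d \<sigma>" and mub: "mutually_unbiased d M e" and d2: "d \<ge> 2" and M1: "M \<ge> 1"
  shows "bound_term M d \<le> (\<Sum>m<M. - (\<Sum>i<d. Re (qf d \<sigma> (e m i)) * log 2 (Re (qf d \<sigma> (e m i)))))"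
proof -
  define p where "p m i = Re (qf d \<sigma> (e m i))" for m i
  define x where "x = real M * real d / (real d + real M - 1)"
  have den: "0 < real d + real M - 1" using d2 M1 by simp
  have "real d + real M - 1 \<le> real M * real d"
  proof -
    have "0 \<le> (real M - 1) * (real d - 1)" using d2 M1 by simp
    then show ?thesis by (simp add: algebra_simps)
  qed
  then have x1: "1 \<le> x" unfolding x_def using den by (simp add: le_divide_eq)
  define k where "k = nat \<lfloor>x\<rfloor>"
  have fl1: "1 \<le> \<lfloor>x\<rfloor>" using x1 by simp
  have kK: "real k = Kval M d" unfolding k_def Kval_def x_def[symmetric] using fl1 by simp
  have k1: "k \<ge> 1" unfolding k_def using fl1 by linarith
  define K where "K = real k"
  define L where "L = log 2 (1 + 1 / K)"
  have "1 \<le> 1 + 1 / K" unfolding K_def by simp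
  moreover have "0 < 1 + 1 / K" unfolding K_def by (simp add: add_pos_nonneg)
  ultimately have Lnn: "0 \<le> L" unfolding L_def by (subst zero_le_log_cancel_iff) auto
  define IC where "IC m = (\<Sum>i<d. (p m i)^2)" for m
  have each: "log 2 K + (K + 1) * (1 - K * IC m) * L \<le> - (\<Sum>i<d. p m i * log 2 (p m i))" if m: "m < M" for m
    unfolding K_def L_def IC_def p_def
    using ht_fun[OF k1, of d "\<lambda>i. Re (qf d \<sigma> (e m i))"] qf_nonneg[OF dens] qf_sum[OF dens mub_onb[OF mub m]]
    by simp
  have "(\<Sum>m<M. log 2 K + (K + 1) * (1 - K * IC m) * L) \<le> (\<Sum>m<M. - (\<Sum>i<d. p m i * log 2 (p m i)))"
    using each by (intro sum_mono) auto
  moreover have "(\<Sum>m<M. log 2 K + (K + 1) * (1 - K * IC m) * L)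
      = real M * log 2 K + (K + 1) * (real M - K * (\<Sum>m<M. IC m)) * L"
    by (simp add: sum.distrib algebra_simps sum_distrib_left sum_subtractf)
  moreover have "(K + 1) * (real M - K * ((real d + real M - 1) / real d)) * L
      \<le> (K + 1) * (real M - K * (\<Sum>m<M. IC m)) * L"
  proof -
    have ic: "(\<Sum>m<M. IC m) \<le> (real d + real M - 1) / real d"
      unfolding IC_def p_def using mub_ic[OF dens mub] d2 by simp
    have "K * (\<Sum>m<M. IC m) \<le> K * ((real d + real M - 1) / real d)"
      using ic K_def by (intro mult_left_mono) auto
    then have "real M - K * ((real d + real M - 1) / real d) \<le> real M - K * (\<Sum>m<M. IC m)" by simp
    then show ?thesis using Lnn K_def by (intro mult_right_mono mult_left_mono) auto
  qed
  moreover have "bound_term M d = real M * log 2 K + (K + 1) * (real M - K * ((real d + real M - 1) / real d)) * L"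
    unfolding bound_term_def Let_def K_def L_def kK[symmetric] by (simp add: algebra_simps)
  ultimately show ?thesis unfolding p_def by linarith
qed

lemma mix_entropy:
  fixes q :: "nat \<Rightarrow> real" and a b :: "nat \<Rightarrow> nat \<Rightarrow> real"
  assumes q: "\<And>j. j < J \<Longrightarrow> 0 \<le> q j" and qs: "(\<Sum>j<J. q j) = 1"
    and a: "\<And>j i. j < J \<Longrightarrow> 0 \<le> a j i" and b: "\<And>j s. j < J \<Longrightarrow> 0 \<le> b j s"
    and as: "\<And>j. j < J \<Longrightarrow> (\<Sum>i<dA. a j i) = 1" and bs: "\<And>j. j < J \<Longrightarrow> (\<Sum>s<dB. b j s) = 1"
  shows "(\<Sum>j<J. q j * (- (\<Sum>i<dA. a j i * log 2 (a j i)) + - (\<Sum>s<dB. b j s * log 2 (b j s))))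
    \<le> - (\<Sum>i<dA. \<Sum>s<dB. (\<Sum>j<J. q j * a j i * b j s) * log 2 (\<Sum>j<J. q j * a j i * b j s))"
proof -
  define P where "P i s = (\<Sum>j<J. q j * a j i * b j s)" for i s
  have pt: "P i s * ln (P i s) \<le> (\<Sum>j<J. q j * (a j i * b j s * ln (a j i) + a j i * b j s * ln (b j s)))" for i s
  proof -
    have "P i s * ln (P i s) \<le> (\<Sum>j<J. q j * ((a j i * b j s) * ln (a j i * b j s)))"
      unfolding P_def using xlnx_concave[OF q qs, of "\<lambda>j. a j i * b j s"] a b
      by (simp add: mult.assoc)
    also have "\<dots> = (\<Sum>j<J. q j * (a j i * b j s * ln (a j i) + a j i * b j s * ln (b j s)))"
      using a b xlnx_prod by (intro sum.cong refl) auto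
    finally show ?thesis .
  qed
  have "(\<Sum>i<dA. \<Sum>s<dB. P i s * ln (P i s))
      \<le> (\<Sum>i<dA. \<Sum>s<dB. \<Sum>j<J. q j * (a j i * b j s * ln (a j i) + a j i * b j s * ln (b j s)))"
    using pt by (intro sum_mono) auto
  also have "\<dots> = (\<Sum>j<J. \<Sum>i<dA. \<Sum>s<dB. q j * (a j i * b j s * ln (a j i) + a j i * b j s * ln (b j s)))"
  proof -
    have "(\<Sum>i<dA. \<Sum>s<dB. \<Sum>j<J. q j * (a j i * b j s * ln (a j i) + a j i * b j s * ln (b j s)))
       = (\<Sum>i<dA. \<Sum>j<J. \<Sum>s<dB. q j * (a j i * b j s * ln (a j i) + a j i * b j s * ln (b j s)))"
      by (rule sum.cong[OF refl], rule sum.swap)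
    also have "\<dots> = (\<Sum>j<J. \<Sum>i<dA. \<Sum>s<dB. q j * (a j i * b j s * ln (a j i) + a j i * b j s * ln (b j s)))"
      by (rule sum.swap)
    finally show ?thesis .
  qed
  also have "\<dots> = (\<Sum>j<J. q j * ((\<Sum>i<dA. a j i * ln (a j i)) + (\<Sum>s<dB. b j s * ln (b j s))))"
  proof (intro sum.cong refl)
    fix j assume j: "j \<in> {..<J}"
    have "(\<Sum>i<dA. \<Sum>s<dB. q j * (a j i * b j s * ln (a j i) + a j i * b j s * ln (b j s)))
      = q j * ((\<Sum>i<dA. \<Sum>s<dB. (a j i * ln (a j i)) * b j s) + (\<Sum>i<dA. \<Sum>s<dB. a j i * (b j s * ln (b j s))))"
      by (simp add: sum.distrib sum_distrib_left algebra_simps)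
    also have "\<dots> = q j * ((\<Sum>i<dA. a j i * ln (a j i)) * (\<Sum>s<dB. b j s) + (\<Sum>i<dA. a j i) * (\<Sum>s<dB. b j s * ln (b j s)))"
      by (simp only: sum_product)
    finally have "(\<Sum>i<dA. \<Sum>s<dB. q j * (a j i * b j s * ln (a j i) + a j i * b j s * ln (b j s)))
      = q j * ((\<Sum>i<dA. a j i * ln (a j i)) * (\<Sum>s<dB. b j s) + (\<Sum>i<dA. a j i) * (\<Sum>s<dB. b j s * ln (b j s)))" .
    then show "(\<Sum>i<dA. \<Sum>s<dB. q j * (a j i * b j s * ln (a j i) + a j i * b j s * ln (b j s)))
      = q j * ((\<Sum>i<dA. a j i * ln (a j i)) + (\<Sum>s<dB. b j s * ln (b j s)))"
      using as[of j] bs[of j] j by simp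
  qed
  finally have lnver: "(\<Sum>i<dA. \<Sum>s<dB. P i s * ln (P i s))
      \<le> (\<Sum>j<J. q j * ((\<Sum>i<dA. a j i * ln (a j i)) + (\<Sum>s<dB. b j s * ln (b j s))))" .
  have l2: "0 < ln (2::real)" by simp
  have conv: "(\<Sum>i\<in>I. f i * log 2 (f i)) = (\<Sum>i\<in>I. f i * ln (f i)) / ln 2" for I and f :: "nat \<Rightarrow> real"
    unfolding log_def by (simp add: sum_divide_distrib)
  have conv2: "(\<Sum>i<dA. \<Sum>s<dB. P i s * log 2 (P i s)) = (\<Sum>i<dA. \<Sum>s<dB. P i s * ln (P i s)) / ln 2"
    unfolding log_def by (simp add: sum_divide_distrib)
  have "(\<Sum>j<J. q j * (- (\<Sum>i<dA. a j i * log 2 (a j i)) + - (\<Sum>s<dB. b j s * log 2 (b j s))))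
     = (\<Sum>j<J. - (q j * ((\<Sum>i<dA. a j i * ln (a j i)) + (\<Sum>s<dB. b j s * ln (b j s))) / ln 2))"
    unfolding conv using l2 by (intro sum.cong refl) (simp add: field_simps)
  also have "\<dots> = - ((\<Sum>j<J. q j * ((\<Sum>i<dA. a j i * ln (a j i)) + (\<Sum>s<dB. b j s * ln (b j s)))) / ln 2)"
    by (simp add: sum_negf sum_divide_distrib)
  also have "\<dots> \<le> - ((\<Sum>i<dA. \<Sum>s<dB. P i s * ln (P i s)) / ln 2)"
    using lnver l2 by (simp add: divide_right_mono)
  also have "\<dots> = - (\<Sum>i<dA. \<Sum>s<dB. P i s * log 2 (P i s))" using conv2 by simp
  finally show ?thesis unfolding P_def .
qed



lemma ifrem: "(if x = 0 then 0 else x * y) = x * (y::real)" by simp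

lemma four_sum:
  fixes c :: "nat \<Rightarrow> complex" and f g :: "nat \<Rightarrow> nat \<Rightarrow> nat \<Rightarrow> complex"
  shows "(\<Sum>a<dA. \<Sum>b<dB. \<Sum>a'<dA. \<Sum>b'<dB. \<Sum>j<J. c j * (f j a a' * g j b b'))
       = (\<Sum>j<J. c j * ((\<Sum>a<dA. \<Sum>a'<dA. f j a a') * (\<Sum>b<dB. \<Sum>b'<dB. g j b b')))"
proof -
  define X where "X j a b a' b' = c j * (f j a a' * g j b b')" for j a b a' b'
  have "(\<Sum>a<dA. \<Sum>b<dB. \<Sum>a'<dA. \<Sum>b'<dB. \<Sum>j<J. X j a b a' b')
      = (\<Sum>a<dA. \<Sum>b<dB. \<Sum>a'<dA. \<Sum>j<J. \<Sum>b'<dB. X j a b a' b')"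
    by (rule sum.cong[OF refl], rule sum.cong[OF refl], rule sum.cong[OF refl], rule sum.swap)
  also have "\<dots> = (\<Sum>a<dA. \<Sum>b<dB. \<Sum>j<J. \<Sum>a'<dA. \<Sum>b'<dB. X j a b a' b')"
    by (rule sum.cong[OF refl], rule sum.cong[OF refl], rule sum.swap)
  also have "\<dots> = (\<Sum>a<dA. \<Sum>j<J. \<Sum>b<dB. \<Sum>a'<dA. \<Sum>b'<dB. X j a b a' b')"
    by (rule sum.cong[OF refl], rule sum.swap)
  also have "\<dots> = (\<Sum>j<J. \<Sum>a<dA. \<Sum>b<dB. \<Sum>a'<dA. \<Sum>b'<dB. X j a b a' b')"
    by (rule sum.swap)
  also have "\<dots> = (\<Sum>j<J. c j * (\<Sum>a<dA. \<Sum>b<dB. \<Sum>a'<dA. \<Sum>b'<dB. f j a a' * g j b b'))"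
    unfolding X_def by (simp only: sum_distrib_left)
  also have "\<dots> = (\<Sum>j<J. c j * ((\<Sum>a<dA. \<Sum>a'<dA. f j a a') * (\<Sum>b<dB. \<Sum>b'<dB. g j b b')))"
    by (simp only: sum_product)
  finally show ?thesis unfolding X_def .
qed

lemma joint_sep:
  fixes J :: nat and q :: "nat \<Rightarrow> real" and \<rho>A \<rho>B :: "nat \<Rightarrow> nat \<Rightarrow> nat \<Rightarrow> complex"
  assumes q: "\<forall>j<J. density_op dA (\<rho>A j) \<and> density_op dB (\<rho>B j)"
    and rho: "\<forall>a<dA. \<forall>b<dB. \<forall>a'<dA. \<forall>b'<dB.
           \<rho> (a, b) (a', b') = (\<Sum>j<J. complex_of_real (q j) * \<rho>A j a a' * \<rho>B j b b')"
  shows "joint_prob dA dB \<rho> u v = (\<Sum>j<J. q j * Re (qf dA (\<rho>A j) u) * Re (qf dB (\<rho>B j) v))"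
proof -
  have "(\<Sum>a<dA. \<Sum>b<dB. \<Sum>a'<dA. \<Sum>b'<dB. cnj (u a) * cnj (v b) * \<rho> (a, b) (a', b') * u a' * v b')
     = (\<Sum>a<dA. \<Sum>b<dB. \<Sum>a'<dA. \<Sum>b'<dB. \<Sum>j<J. complex_of_real (q j) *
          ((cnj (u a) * \<rho>A j a a' * u a') * (cnj (v b) * \<rho>B j b b' * v b')))"
  proof (intro sum.cong refl)
    fix a b a' b' assume "a \<in> {..<dA}" "b \<in> {..<dB}" "a' \<in> {..<dA}" "b' \<in> {..<dB}"
    then have "\<rho> (a, b) (a', b') = (\<Sum>j<J. complex_of_real (q j) * \<rho>A j a a' * \<rho>B j b b')"
      using rho by simp
    then show "cnj (u a) * cnj (v b) * \<rho> (a, b) (a', b') * u a' * v b' = (\<Sum>j<J. complex_of_real (q j) *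
          ((cnj (u a) * \<rho>A j a a' * u a') * (cnj (v b) * \<rho>B j b b' * v b')))"
      by (simp add: sum_distrib_left sum_distrib_right mult_ac)
  qed
  also have "\<dots> = (\<Sum>j<J. complex_of_real (q j) * (qf dA (\<rho>A j) u * qf dB (\<rho>B j) v))"
    unfolding qf_def using four_sum[where c="\<lambda>j. complex_of_real (q j)" and f="\<lambda>j a a'. cnj (u a) * \<rho>A j a a' * u a'" and g="\<lambda>j b b'. cnj (v b) * \<rho>B j b b' * v b'" and dA=dA and dB=dB and J=J]
    by simp
  also have "\<dots> = (\<Sum>j<J. complex_of_real (q j * Re (qf dA (\<rho>A j) u) * Re (qf dB (\<rho>B j) v)))"
  proof (intro sum.cong refl)
    fix j assume "j \<in> {..<J}"
    then have dA: "density_op dA (\<rho>A j)" and dB: "density_op dB (\<rho>B j)" using q by auto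
    have e1: "qf dA (\<rho>A j) u = complex_of_real (Re (qf dA (\<rho>A j) u))" by (rule qf_of_real[OF dA])
    have e2: "qf dB (\<rho>B j) v = complex_of_real (Re (qf dB (\<rho>B j) v))" by (rule qf_of_real[OF dB])
    show "complex_of_real (q j) * (qf dA (\<rho>A j) u * qf dB (\<rho>B j) v)
       = complex_of_real (q j * Re (qf dA (\<rho>A j) u) * Re (qf dB (\<rho>B j) v))"
      by (simp only: of_real_mult e1[symmetric] e2[symmetric] mult.assoc)
  qed
  also have "\<dots> = complex_of_real (\<Sum>j<J. q j * Re (qf dA (\<rho>A j) u) * Re (qf dB (\<rho>B j) v))"
    by simp
  finally have F: "(\<Sum>a<dA. \<Sum>b<dB. \<Sum>a'<dA. \<Sum>b'<dB. cnj (u a) * cnj (v b) * \<rho> (a, b) (a', b') * u a' * v b')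
     = complex_of_real (\<Sum>j<J. q j * Re (qf dA (\<rho>A j) u) * Re (qf dB (\<rho>B j) v))" .
  show ?thesis unfolding joint_prob_def F by simp
qed

theorem mainTheorem5:
  fixes dA dB M :: nat
    and \<rho> :: "nat \<times> nat \<Rightarrow> nat \<times> nat \<Rightarrow> complex"
    and eA :: "nat \<Rightarrow> nat \<Rightarrow> nat \<Rightarrow> complex"
    and eB :: "nat \<Rightarrow> nat \<Rightarrow> nat \<Rightarrow> complex"
  assumes "dA \<ge> 2" and "dB \<ge> 2" and "M \<ge> 1"
    and "separable dA dB \<rho>"
    and "mutually_unbiased dA M eA"
    and "mutually_unbiased dB M eB"
  shows "(\<Sum>m<M. shannon2 dA dB (\<lambda>i s. joint_prob dA dB \<rho> (eA m i) (eB m s)))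
           \<ge> bound_term M dA + bound_term M dB"
proof -
  obtain J :: nat and q :: "nat \<Rightarrow> real" and \<rho>A \<rho>B :: "nat \<Rightarrow> nat \<Rightarrow> nat \<Rightarrow> complex" where qnn: "\<forall>j<J. 0 \<le> q j" and qs: "(\<Sum>j<J. q j) = 1"
    and dens: "\<forall>j<J. density_op dA (\<rho>A j) \<and> density_op dB (\<rho>B j)"
    and rho: "\<forall>a<dA. \<forall>b<dB. \<forall>a'<dA. \<forall>b'<dB.
           \<rho> (a, b) (a', b') = (\<Sum>j<J. complex_of_real (q j) * \<rho>A j a a' * \<rho>B j b b')"
    using assms(4) unfolding separable_def by blast
  define a where "a j m i = Re (qf dA (\<rho>A j) (eA m i))" for j m i
  define b where "b j m s = Re (qf dB (\<rho>B j) (eB m s))" for j m s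
  define HA where "HA j m = - (\<Sum>i<dA. a j m i * log 2 (a j m i))" for j m
  define HB where "HB j m = - (\<Sum>s<dB. b j m s * log 2 (b j m s))" for j m
  have per_m: "(\<Sum>j<J. q j * (HA j m + HB j m)) \<le> shannon2 dA dB (\<lambda>i s. joint_prob dA dB \<rho> (eA m i) (eB m s))"
    if m: "m < M" for m
  proof -
    have jp: "joint_prob dA dB \<rho> (eA m i) (eB m s) = (\<Sum>j<J. q j * a j m i * b j m s)" for i s
      unfolding a_def b_def by (rule joint_sep[OF dens rho])
    have "shannon2 dA dB (\<lambda>i s. joint_prob dA dB \<rho> (eA m i) (eB m s))
        = - (\<Sum>i<dA. \<Sum>s<dB. (\<Sum>j<J. q j * a j m i * b j m s) * log 2 (\<Sum>j<J. q j * a j m i * b j m s))"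
      unfolding shannon2_def jp by (simp only: ifrem)
    moreover have "(\<Sum>j<J. q j * (HA j m + HB j m))
       \<le> - (\<Sum>i<dA. \<Sum>s<dB. (\<Sum>j<J. q j * a j m i * b j m s) * log 2 (\<Sum>j<J. q j * a j m i * b j m s))"
      unfolding HA_def HB_def
    proof (rule mix_entropy)
      show "\<And>j. j < J \<Longrightarrow> 0 \<le> q j" using qnn by auto
      show "(\<Sum>j<J. q j) = 1" by (rule qs)
      show "\<And>j i. j < J \<Longrightarrow> 0 \<le> a j m i" unfolding a_def using dens qf_nonneg by blast
      show "\<And>j s. j < J \<Longrightarrow> 0 \<le> b j m s" unfolding b_def using dens qf_nonneg by blast
      show "\<And>j. j < J \<Longrightarrow> (\<Sum>i<dA. a j m i) = 1" unfolding a_def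
        using dens qf_sum mub_onb[OF assms(5) m] by blast
      show "\<And>j. j < J \<Longrightarrow> (\<Sum>s<dB. b j m s) = 1" unfolding b_def
        using dens qf_sum mub_onb[OF assms(6) m] by blast
    qed
    ultimately show ?thesis by simp
  qed
  have "(\<Sum>m<M. \<Sum>j<J. q j * (HA j m + HB j m)) \<le> (\<Sum>m<M. shannon2 dA dB (\<lambda>i s. joint_prob dA dB \<rho> (eA m i) (eB m s)))"
    using per_m by (intro sum_mono) auto
  moreover have "(\<Sum>m<M. \<Sum>j<J. q j * (HA j m + HB j m)) = (\<Sum>j<J. q j * ((\<Sum>m<M. HA j m) + (\<Sum>m<M. HB j m)))"
    by (subst sum.swap) (simp add: sum_distrib_left sum.distrib distrib_left)
  moreover have "(\<Sum>j<J. q j * (bound_term M dA + bound_term M dB)) \<le> (\<Sum>j<J. q j * ((\<Sum>m<M. HA j m) + (\<Sum>m<M. HB j m)))"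
  proof (rule sum_mono)
    fix j assume j: "j \<in> {..<J}"
    have "bound_term M dA \<le> (\<Sum>m<M. HA j m)"
      unfolding HA_def a_def using party_bound[of dA "\<rho>A j" M eA] dens j assms by auto
    moreover have "bound_term M dB \<le> (\<Sum>m<M. HB j m)"
      unfolding HB_def b_def using party_bound[of dB "\<rho>B j" M eB] dens j assms by auto
    ultimately show "q j * (bound_term M dA + bound_term M dB) \<le> q j * ((\<Sum>m<M. HA j m) + (\<Sum>m<M. HB j m))"
      using qnn j by (intro mult_left_mono) auto
  qed
  moreover have "(\<Sum>j<J. q j * (bound_term M dA + bound_term M dB)) = bound_term M dA + bound_term M dB"
    using qs by (simp add: sum_distrib_right[symmetric])
  ultimately show ?thesis by linarith
qed



end
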